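(* Let $k$ be a positive integer and let $G$ be a $3$-graph with $\lambda(G)>\lambda(K_{k+1}^3)$, and let $\vec x$ be an optimal weight vector of $G$. Then for every $v\in V(G)$, its weight satisfies $x_v<1-\frac{\sqrt{k(k-1)}}{k+1}$.
   Context: For a $3$-graph $G$ on vertex set $[n]$ and $\vec x\in\Delta=\{\vec x\in[0,1]^n:\sum_i x_i=1\}$, put $\lambda(G,\vec x)=\sum_{e\in E(G)}\prod_{i\in e}x_i$ and $\lambda(G)=\max_{\vec x\in\Delta}\lambda(G,\vec x)$ (the Lagrangian). A vector $\vec x\in\Delta$ with $\lambda(G,\vec x)=\lambda(G)$ is an optimal weight vector, and $x_v$ is the weight of vertex $v$. $K_m^3$ is the complete $3$-graph on $m$ vertices. *)

theory Defs
  imports Complex_Main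
begin

definition is_3graph :: "nat \<Rightarrow> nat set set \<Rightarrow> bool" where
  "is_3graph n E \<longleftrightarrow> (\<forall>e\<in>E. e \<subseteq> {0..<n} \<and> card e = 3)"

definition simplex :: "nat \<Rightarrow> (nat \<Rightarrow> real) set" where
  "simplex n = {x. (\<forall>i<n. 0 \<le> x i \<and> x i \<le> 1) \<and> (\<Sum>i<n. x i) = 1}"

definition lagr_at :: "nat set set \<Rightarrow> (nat \<Rightarrow> real) \<Rightarrow> real" where
  "lagr_at E x = (\<Sum>e\<in>E. \<Prod>i\<in>e. x i)"

text \<open>Lagrangian: maximum (supremum, attained by compactness) over the simplex.\<close>
definition lagrangian :: "nat \<Rightarrow> nat set set \<Rightarrow> real" where
  "lagrangian n E = (SUP x\<in>simplex n. lagr_at E x)"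

definition optimal_weight :: "nat \<Rightarrow> nat set set \<Rightarrow> (nat \<Rightarrow> real) \<Rightarrow> bool" where
  "optimal_weight n E x \<longleftrightarrow> x \<in> simplex n \<and> lagr_at E x = lagrangian n E"

definition complete3 :: "nat \<Rightarrow> nat set set" where
  "complete3 m = {e. e \<subseteq> {0..<m} \<and> card e = 3}"

end

theory Submission
  imports Defs
begin

lemma fin3: "is_3graph n E \<Longrightarrow> finite E"
  unfolding is_3graph_def
  by (rule finite_subset[of _ "Pow {0..<n}"]) auto

lemma lagr_le:
  assumes g: "is_3graph n E" and z: "z \<in> simplex n"
  shows "lagr_at E z \<le> lagrangian n E"
proof -
  have fin: "finite E" using fin3[OF g] .
  have "lagr_at E w \<le> real (card E)" if "w \<in> simplex n" for w
  proof -
    have "lagr_at E w \<le> (\<Sum>e\<in>E. 1)"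
      unfolding lagr_at_def
    proof (rule sum_mono)
      fix e assume "e \<in> E"
      then have "e \<subseteq> {0..<n}" using g by (auto simp: is_3graph_def)
      then show "(\<Prod>i\<in>e. w i) \<le> 1"
        using that by (intro prod_le_1) (auto simp: simplex_def)
    qed
    then show ?thesis by simp
  qed
  then have bdd: "bdd_above (lagr_at E ` simplex n)"
    by (intro bdd_aboveI[of _ "real (card E)"]) auto
  show ?thesis unfolding lagrangian_def by (rule cSUP_upper[OF z bdd])
qed

lemma link_bound:
  fixes x :: "nat \<Rightarrow> real"
  assumes fin: "finite Ev" and ev: "\<And>e. e \<in> Ev \<Longrightarrow> v \<in> e \<and> card e = 3 \<and> e \<subseteq> {..<n}"
    and nn: "\<And>i. i < n \<Longrightarrow> 0 \<le> x i"
  shows "2 * (\<Sum>e\<in>Ev. \<Prod>i\<in>e-{v}. x i) \<le> (\<Sum>i\<in>{..<n}-{v}. x i)^2"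
proof -
  define S where "S = {..<n} - {v}"
  define P where "P e = {(i,j). i \<in> e-{v} \<and> j \<in> e-{v} \<and> i \<noteq> j}" for e :: "nat set"
  have two: "\<exists>p q. e - {v} = {p,q} \<and> p \<noteq> q" if "e \<in> Ev" for e
  proof -
    have "finite e" using ev[OF that] by (auto intro: finite_subset)
    then have "card (e - {v}) = 2" using ev[OF that] by simp
    then show ?thesis by (simp add: card_2_iff)
  qed
  have a: "(\<Sum>(i,j)\<in>P e. x i * x j) = 2 * (\<Prod>i\<in>e-{v}. x i)" if e: "e \<in> Ev" for e
  proof -
    obtain p q where pq: "e - {v} = {p,q}" "p \<noteq> q" using two[OF e] by blast
    have "P e = {(p,q),(q,p)}" unfolding P_def using pq by auto
    then show ?thesis using pq by simp
  qed
  have finP: "finite (P e)" if e: "e \<in> Ev" for e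
  proof -
    obtain p q where pq: "e - {v} = {p,q}" "p \<noteq> q" using two[OF e] by blast
    have "P e = {(p,q),(q,p)}" unfolding P_def using pq by auto
    then show ?thesis by simp
  qed
  have disj: "\<forall>e1\<in>Ev. \<forall>e2\<in>Ev. e1 \<noteq> e2 \<longrightarrow> P e1 \<inter> P e2 = {}"
  proof (intro ballI impI)
    fix e1 e2 assume e1: "e1 \<in> Ev" and e2: "e2 \<in> Ev" and ne: "e1 \<noteq> e2"
    show "P e1 \<inter> P e2 = {}"
    proof (rule ccontr)
      assume "P e1 \<inter> P e2 \<noteq> {}"
      then obtain i j where ij: "(i,j) \<in> P e1" "(i,j) \<in> P e2" by auto
      obtain p q where pq: "e1 - {v} = {p,q}" "p \<noteq> q" using two[OF e1] by blast
      obtain p' q' where pq': "e2 - {v} = {p',q'}" "p' \<noteq> q'" using two[OF e2] by blast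
      have "e1 - {v} = {i,j}" using ij pq unfolding P_def by auto
      moreover have "e2 - {v} = {i,j}" using ij pq' unfolding P_def by auto
      ultimately have "e1 - {v} = e2 - {v}" by simp
      moreover have "v \<in> e1" "v \<in> e2" using ev e1 e2 by auto
      ultimately have "e1 = e2" by blast
      then show False using ne by simp
    qed
  qed
  have "2 * (\<Sum>e\<in>Ev. \<Prod>i\<in>e-{v}. x i) = (\<Sum>e\<in>Ev. \<Sum>(i,j)\<in>P e. x i * x j)"
    by (simp add: sum_distrib_left a)
  also have "\<dots> = (\<Sum>(i,j)\<in>(\<Union>(P ` Ev)). x i * x j)"
    by (rule sum.UNION_disjoint[symmetric]) (use fin finP disj in auto)
  also have "\<dots> \<le> (\<Sum>(i,j)\<in>S \<times> S. x i * x j)"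
  proof (rule sum_mono2)
    show "finite (S \<times> S)" unfolding S_def by simp
    show "\<Union>(P ` Ev) \<subseteq> S \<times> S" unfolding S_def P_def using ev by auto
    show "\<And>b. b \<in> S \<times> S - \<Union>(P ` Ev) \<Longrightarrow> 0 \<le> (case b of (i,j) \<Rightarrow> x i * x j)"
      unfolding S_def using nn by auto
  qed
  also have "\<dots> = (\<Sum>i\<in>S. x i)^2"
    by (simp add: power2_eq_square sum_product sum.cartesian_product)
  finally show ?thesis unfolding S_def .
qed

lemma final_ineq:
  fixes k :: nat and b :: real
  assumes "b \<ge> 0" "real k * (real k - 1) / (real k + 1)^2 < b^2"
  shows "sqrt (real k * (real k - 1)) / (real k + 1) < b"
proof -
  have "real k * (real k - 1) < (b * (real k + 1))^2"
    using assms(2) by (simp add: divide_less_eq power_mult_distrib)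
  then have "sqrt (real k * (real k - 1)) < sqrt ((b * (real k + 1))^2)"
    by (rule real_sqrt_less_mono)
  also have "\<dots> = b * (real k + 1)" using assms(1) by simp
  finally show ?thesis by (simp add: divide_less_eq)
qed

lemma choose3: "6 * real ((k+1) choose 3) = real (k+1) * real k * (real k - 1)"
proof (cases "k \<ge> 2")
  case True
  then obtain m where m: "k = Suc (Suc m)" by (metis add_2_eq_Suc le_Suc_ex)
  have "fact 3 * fact (k+1-3) * ((k+1) choose 3) = (fact (k+1) :: nat)"
    using binomial_fact_lemma[of 3 "k+1"] True by simp
  moreover have "k+1-3 = m" using m by simp
  moreover have "fact (k+1) = (k+1)*k*(k-1)* (fact m :: nat)"
    using m by (simp add: algebra_simps)
  ultimately have "6 * ((k+1) choose 3) = (k+1)*k*(k-1)"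
    by (simp add: fact_numeral)
  then have "6 * real ((k+1) choose 3) = real ((k+1)*k*(k-1))"
    by (metis of_nat_mult of_nat_numeral)
  then show ?thesis using True by (simp add: of_nat_diff algebra_simps)
next
  case False
  then have "k = 0 \<or> k = 1" by auto
  then show ?thesis by auto
qed

lemma K_low:
  fixes k :: nat assumes "k \<ge> 1"
  shows "real k * (real k - 1) / (6 * (real k + 1)^2) \<le> lagrangian (k+1) (complete3 (k+1))"
proof -
  define z where "z = (\<lambda>i::nat. 1 / (real k + 1))"
  have g: "is_3graph (k+1) (complete3 (k+1))" by (simp add: is_3graph_def complete3_def)
  have zs: "z \<in> simplex (k+1)" by (simp add: simplex_def z_def field_simps)
  have c: "card (complete3 (k+1)) = (k+1) choose 3"
    unfolding complete3_def using n_subsets[of "{0..<k+1}" 3] by simp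
  have "lagr_at (complete3 (k+1)) z = real (card (complete3 (k+1))) * (1 / (real k + 1))^3"
    unfolding lagr_at_def z_def
    by (simp add: complete3_def)
  also have "\<dots> = real k * (real k - 1) / (6 * (real k + 1)^2)"
  proof -
    have cc: "real (card (complete3 (k+1))) = real (k+1)*real k*(real k-1)/6"
      using choose3[of k] c by simp
    have p1: "real k + 1 \<noteq> 0" "1 + real k \<noteq> 0" by linarith+
    have gen: "(t*b/6) * (1/t)^3 = b/(6*t^2)" if "t \<noteq> 0" for t b :: real
      using that by (simp add: field_simps power3_eq_cube power2_eq_square)
    have e: "real (k+1)*real k*(real k-1)/6 = (real k + 1)*(real k*(real k-1))/6" by (simp add: mult.assoc)
    show ?thesis unfolding cc e by (rule gen[OF p1(1)])
  qed
  finally show ?thesis using lagr_le[OF g zs] by simp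
qed

theorem claim3p1:
  fixes k n :: nat and E :: "nat set set" and x :: "nat \<Rightarrow> real"
  assumes "k \<ge> 1"
    and "is_3graph n E"
    and "lagrangian n E > lagrangian (k + 1) (complete3 (k + 1))"
    and "optimal_weight n E x"
  shows "\<forall>v<n. x v < 1 - sqrt (real k * (real k - 1)) / (real k + 1)"
proof (intro allI impI)
  fix v assume v: "v < n"
  define a where "a = x v"
  have xs: "x \<in> simplex n" and xl: "lagr_at E x = lagrangian n E"
    using assms(4) by (auto simp: optimal_weight_def)
  have x0: "\<And>i. i < n \<Longrightarrow> 0 \<le> x i" and xsum: "(\<Sum>i<n. x i) = 1"
    using xs by (auto simp: simplex_def)
  define lam where "lam = lagrangian n E"
  have lamlow: "real k * (real k - 1) / (6 * (real k + 1)^2) < lam"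
    using K_low[OF assms(1)] assms(3) unfolding lam_def by linarith
  have finE: "finite E" using fin3[OF assms(2)] .
  have Eprop: "\<And>e. e \<in> E \<Longrightarrow> e \<subseteq> {..<n} \<and> card e = 3 \<and> finite e"
  proof -
    fix e assume "e \<in> E"
    then have "e \<subseteq> {0..<n}" "card e = 3" using assms(2) unfolding is_3graph_def by auto
    then show "e \<subseteq> {..<n} \<and> card e = 3 \<and> finite e"
      by (auto simp: atLeast0LessThan intro: finite_subset[of _ "{..<n}"])
  qed
  have Ssum: "(\<Sum>i\<in>{..<n}-{v}. x i) = 1 - a"
    using xsum sum.remove[of "{..<n}" v x] v unfolding a_def by simp
  have a0: "0 \<le> a" using x0 v unfolding a_def by simp
  have S0: "0 \<le> (\<Sum>i\<in>{..<n}-{v}. x i)" using x0 by (intro sum_nonneg) auto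
  have a1: "a \<le> 1" using Ssum S0 by simp
  have key: "6 * lam \<le> (1 - a)^2" if apos: "0 < a"
  proof (cases "a = 1")
    case True
    have others: "x i = 0" if "i \<in> {..<n}-{v}" for i
      using Ssum True sum_nonneg_eq_0_iff[of "{..<n}-{v}" x] x0 that by auto
    have "lagr_at E x = 0"
      unfolding lagr_at_def
    proof (rule sum.neutral, rule ballI)
      fix e assume e: "e \<in> E"
      have "\<not> e \<subseteq> {v}"
      proof
        assume "e \<subseteq> {v}"
        then have "card e \<le> card {v}" by (intro card_mono) auto
        then show False using Eprop[OF e] by simp
      qed
      then obtain i where "i \<in> e" "i \<noteq> v" by blast
      then have "x i = 0" using others Eprop[OF e] by auto
      then show "(\<Prod>i\<in>e. x i) = 0" using \<open>i \<in> e\<close> Eprop[OF e] by (auto intro: prod_zero)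
    qed
    then show ?thesis using xl True unfolding lam_def by simp
  next
    case False
    then have alt1: "a < 1" using a1 by simp
    define Ev where "Ev = {e\<in>E. v \<in> e}"
    define Eo where "Eo = {e\<in>E. v \<notin> e}"
    have finEv: "finite Ev" and finEo: "finite Eo" using finE unfolding Ev_def Eo_def by auto
    have EU: "E = Ev \<union> Eo" and Edisj: "Ev \<inter> Eo = {}" unfolding Ev_def Eo_def by auto
    define L where "L = (\<Sum>e\<in>Ev. \<Prod>i\<in>e-{v}. x i)"
    define R where "R = (\<Sum>e\<in>Eo. \<Prod>i\<in>e. x i)"
    have split: "lagr_at E y = y v * (\<Sum>e\<in>Ev. \<Prod>i\<in>e-{v}. y i) + (\<Sum>e\<in>Eo. \<Prod>i\<in>e. y i)" for y
    proof -
      have "lagr_at E y = (\<Sum>e\<in>Ev. \<Prod>i\<in>e. y i) + (\<Sum>e\<in>Eo. \<Prod>i\<in>e. y i)"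
        unfolding lagr_at_def EU using finEv finEo Edisj by (rule sum.union_disjoint)
      moreover have "(\<Sum>e\<in>Ev. \<Prod>i\<in>e. y i) = (\<Sum>e\<in>Ev. y v * (\<Prod>i\<in>e-{v}. y i))"
      proof (rule sum.cong)
        fix e assume e: "e \<in> Ev"
        then have "finite e" "v \<in> e" using Eprop unfolding Ev_def by auto
        then show "(\<Prod>i\<in>e. y i) = y v * (\<Prod>i\<in>e-{v}. y i)" by (rule prod.remove)
      qed simp
      ultimately show ?thesis by (simp add: sum_distrib_left)
    qed
    have lamLR: "lam = a * L + R" using split[of x] xl unfolding lam_def L_def R_def a_def by simp
    define y where "y u = (\<lambda>i. if i = v then a - u*(1-a) else (1+u) * x i)" for u :: real
    have yval: "lagr_at E (y u) = (a - u*(1-a)) * (1+u)^2 * L + (1+u)^3 * R" for u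
    proof -
      have 1: "(\<Prod>i\<in>e-{v}. y u i) = (1+u)^2 * (\<Prod>i\<in>e-{v}. x i)" if e: "e \<in> Ev" for e
      proof -
        have "finite e" "card e = 3" "v \<in> e" using Eprop e unfolding Ev_def by auto
        then have c2: "card (e - {v}) = 2" by simp
        have "(\<Prod>i\<in>e-{v}. y u i) = (\<Prod>i\<in>e-{v}. (1+u) * x i)"
          by (rule prod.cong) (auto simp: y_def)
        also have "\<dots> = (1+u)^2 * (\<Prod>i\<in>e-{v}. x i)" by (simp add: prod.distrib c2)
        finally show ?thesis .
      qed
      have 2: "(\<Prod>i\<in>e. y u i) = (1+u)^3 * (\<Prod>i\<in>e. x i)" if e: "e \<in> Eo" for e
      proof -
        have c3: "card e = 3" "v \<notin> e" using Eprop e unfolding Eo_def by auto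
        have "(\<Prod>i\<in>e. y u i) = (\<Prod>i\<in>e. (1+u) * x i)"
          by (rule prod.cong) (use c3 in \<open>auto simp: y_def\<close>)
        also have "\<dots> = (1+u)^3 * (\<Prod>i\<in>e. x i)" by (simp add: prod.distrib c3)
        finally show ?thesis .
      qed
      have yv: "y u v = a - u*(1-a)" by (simp add: y_def)
      have s1: "(\<Sum>e\<in>Ev. \<Prod>i\<in>e-{v}. y u i) = (\<Sum>e\<in>Ev. (1+u)^2 * (\<Prod>i\<in>e-{v}. x i))"
        by (rule sum.cong) (simp_all add: 1)
      have s2: "(\<Sum>e\<in>Eo. \<Prod>i\<in>e. y u i) = (\<Sum>e\<in>Eo. (1+u)^3 * (\<Prod>i\<in>e. x i))"
        by (rule sum.cong) (simp_all add: 2)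
      show ?thesis unfolding L_def R_def
        by (simp only: split yv s1 s2) (simp add: sum_distrib_left mult.assoc)
    qed
    have ysimp: "y u \<in> simplex n" if u0: "0 \<le> u" and ua: "u \<le> a/(1-a)" for u
    proof -
      have "u * (1-a) \<le> a" using ua alt1 by (simp add: le_divide_eq)
      then have yv: "0 \<le> y u v" by (simp add: y_def)
      have ynn: "0 \<le> y u i" if "i < n" for i
        using yv x0[OF that] u0 by (cases "i = v") (auto simp: y_def)
      have "(\<Sum>i<n. y u i) = y u v + (\<Sum>i\<in>{..<n}-{v}. y u i)"
        using sum.remove[of "{..<n}" v "y u"] v by simp
      also have "(\<Sum>i\<in>{..<n}-{v}. y u i) = (\<Sum>i\<in>{..<n}-{v}. (1+u) * x i)"
        by (rule sum.cong) (auto simp: y_def)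
      also have "\<dots> = (1+u) * (1-a)" by (simp add: sum_distrib_left[symmetric] Ssum)
      finally have ys: "(\<Sum>i<n. y u i) = 1" by (simp add: y_def algebra_simps)
      have "y u i \<le> 1" if "i < n" for i
      proof -
        have "y u i \<le> (\<Sum>i<n. y u i)"
          by (rule member_le_sum) (use that ynn in auto)
        then show ?thesis using ys by simp
      qed
      then show ?thesis using ynn ys by (simp add: simplex_def)
    qed
    define c where "c = L*(3*a-1) + 3*R"
    define B where "B = L*(3*a-2) + 3*R"
    define C where "C = R - (1-a)*L"
    have ev_ineq: "c + u*B + u^2*C \<le> 0" if u0: "0 < u" and ua: "u \<le> a/(1-a)" for u
    proof -
      have "lagr_at E (y u) \<le> lam"
        unfolding lam_def by (rule lagr_le[OF assms(2) ysimp]) (use u0 ua in auto)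
      then have "(a - u*(1-a)) * (1+u)^2 * L + (1+u)^3 * R - (a*L+R) \<le> 0"
        using yval lamLR by simp
      moreover have "(a - u*(1-a)) * (1+u)^2 * L + (1+u)^3 * R - (a*L+R) = u * (c + u*B + u^2*C)"
        unfolding c_def B_def C_def by (simp add: algebra_simps power2_eq_square power3_eq_cube)
      ultimately have "u * (c + u*B + u^2*C) \<le> 0" by simp
      then show ?thesis using u0 by (simp add: mult_le_0_iff)
    qed
    have lim: "((\<lambda>u. c + u*B + u^2*C) \<longlongrightarrow> c + 0*B + 0^2*C) (at_right (0::real))"
      by (intro tendsto_intros)
    have evt: "eventually (\<lambda>u. c + u*B + u^2*C \<le> 0) (at_right (0::real))"
    proof -
      have "0 < a/(1-a)" using apos alt1 by simp
      from eventually_at_right_real[OF this] show ?thesis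
        by (rule eventually_mono) (use ev_ineq in auto)
    qed
    have "c \<le> 0" using tendsto_upperbound[OF lim evt] by simp
    then have "3 * lam \<le> L" unfolding lamLR c_def by (simp add: algebra_simps)
    moreover have "2 * L \<le> (1-a)^2"
      using link_bound[OF finEv, of v n x] x0 Eprop Ssum unfolding L_def Ev_def by auto
    ultimately show ?thesis by simp
  qed
  show "x v < 1 - sqrt (real k * (real k - 1)) / (real k + 1)"
  proof (cases "a = 0")
    case True
    have "real k * (real k - 1) / (real k + 1)^2 < 1^2"
    proof -
      have p: "0 < (real k + 1)^2" by (simp add: add_pos_nonneg)
      have "real k * (real k - 1) < 1 * (real k + 1)^2" by (simp add: power2_eq_square algebra_simps)
      then show ?thesis using p by (simp add: divide_less_eq)
    qed
    then have "sqrt (real k * (real k - 1)) / (real k + 1) < 1" by (intro final_ineq) auto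
    then show ?thesis using True unfolding a_def by simp
  next
    case False
    then have "6 * lam \<le> (1 - a)^2" using key a0 by simp
    moreover have "real k * (real k - 1) / (real k + 1)^2 < 6 * lam"
      using lamlow by (simp add: field_simps)
    ultimately have "real k * (real k - 1) / (real k + 1)^2 < (1-a)^2" by simp
    then have "sqrt (real k * (real k - 1)) / (real k + 1) < 1 - a" by (intro final_ineq) (use a1 in auto)
    then show ?thesis unfolding a_def by simp
  qed
qed

end
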